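(* Let $R$ be a unital ring and let $(P,Q,\psi)$ be a unital $R$-system satisfying Condition (FS'). Let $J\subseteq R$ be a $\psi$-compatible ideal such that (a) $1_R\in J$ and (b) $\psi$ is surjective. Then the relative Cuntz–Pimsner ring $\mathcal{O}_{(P,Q,\psi)}(J)$ is strongly $\mathbb{Z}$-graded.
   Context: A $\mathbb{Z}$-graded ring $B=\bigoplus_iB_i$ is strongly graded if $B_mB_n=B_{m+n}$ for all $m,n$. An $R$-system is a triple $(P,Q,\psi)$ with $P,Q$ $R$-bimodules and $\psi:P\otimes_RQ\to R$ an $R$-bimodule homomorphism; it is unital if $R$ is unital and $1_R$ acts as identity on both sides of $P$ and $Q$. Put $P^{\otimes0}=Q^{\otimes0}=R$, $Q^{\otimes n}=Q^{\otimes(n-1)}\otimes_RQ$, $P^{\otimes n}=P\otimes_RP^{\otimes(n-1)}$. A covariant representation of $(P,Q,\psi)$ is a tuple $(S,T,\sigma,B)$ with $B$ a ring, $S:P\to B$, $T:Q\to B$ additive, $\sigma:R\to B$ a ring homomorphism, with $S(pr)=S(p)\sigma(r)$, $S(rp)=\sigma(r)S(p)$, $T(qr)=T(q)\sigma(r)$, $T(rq)=\sigma(r)T(q)$, $\sigma(\psi(p\otimes q))=S(p)T(q)$. For $q\in Q,p\in P$ let $\theta_{q,p}(x)=q\psi(p\otimes x)$ on $Q$ and $\theta_{p,q}(y)=\psi(y\otimes q)p$ on $P$; $\mathcal{F}_P(Q)$ (resp. $\mathcal{F}_Q(P)$) is the additive group generated by all $\theta_{q,p}$ (resp. $\theta_{p,q}$).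 Condition (FS'): there exist $\Theta\in\mathcal{F}_P(Q)$, $\Phi\in\mathcal{F}_Q(P)$ fixing every element of $Q$, resp. $P$. Let $\Delta:R\to\mathrm{End}(Q_R)$, $\Delta(r)(q)=rq$. For a covariant representation there is a unique ring homomorphism $\pi_{T,S}:\mathcal{F}_P(Q)\to B$ with $\pi_{T,S}(\theta_{q,p})=T(q)S(p)$. The Toeplitz representation $(\iota_P,\iota_Q,\iota_R,\mathcal{T}_{(P,Q,\psi)})$ is the universal covariant representation (every covariant representation factors uniquely through it); it is $\mathbb{Z}$-graded with $\mathcal{T}_i$ the additive group generated by elements $\iota_Q^m(q)\iota_P^n(p)$ and $\iota_R(r)\iota_Q^m(q)\iota_P^n(p)$, $q\in Q^{\otimes m},p\in P^{\otimes n}$, $m-n=i$, where $\iota_Q^m(q_1\otimes\cdots\otimes q_m)=\iota_Q(q_1)\cdots\iota_Q(q_m)$, similarly $\iota_P^n$, and $\iota^0=\iota_R$. An ideal $J$ of $R$ is $\psi$-compatible if $\Delta(J)\subseteq\mathcal{F}_P(Q)$. For such $J$, $\mathcal{T}(J)$ is the ideal of $\mathcal{T}_{(P,Q,\psi)}$ generated by $\{\iota_R(x)-\pi_{\iota_Q,\iota_P}(\Delta(x)):x\in J\}$ and the relative Cuntz–Pimsner ring is $\mathcal{O}_{(P,Q,\psi)}(J)=\mathcal{T}_{(P,Q,\psi)}/\mathcal{T}(J)$ with the quotient grading $\mathcal{O}_i=\rho(\mathcal{T}_i)$, $\rho$ the quotient map. *)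

theory Defs
  imports "HOL-Algebra.Algebra"
begin

text \<open>An R-bimodule: an abelian group (the additive part of a ring record; its
multiplicative fields are ignored) with a left and a right R-action.\<close>

record ('r, 'a) bimod = "'a ring" +
  lact :: "'r \<Rightarrow> 'a \<Rightarrow> 'a"
  ract :: "'a \<Rightarrow> 'r \<Rightarrow> 'a"

definition bimodule :: "('r, 'm) ring_scheme \<Rightarrow> ('r, 'a, 'n) bimod_scheme \<Rightarrow> bool" where
  "bimodule R M \<longleftrightarrow> abelian_group M \<and>
     (\<forall>r\<in>carrier R. \<forall>m\<in>carrier M. lact M r m \<in> carrier M \<and> ract M m r \<in> carrier M) \<and>
     (\<forall>r\<in>carrier R. \<forall>s\<in>carrier R. \<forall>m\<in>carrier M.
         lact M (r \<oplus>\<^bsub>R\<^esub> s) m = lact M r m \<oplus>\<^bsub>M\<^esub> lact M s m \<and>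
         lact M (r \<otimes>\<^bsub>R\<^esub> s) m = lact M r (lact M s m) \<and>
         ract M m (r \<oplus>\<^bsub>R\<^esub> s) = ract M m r \<oplus>\<^bsub>M\<^esub> ract M m s \<and>
         ract M m (r \<otimes>\<^bsub>R\<^esub> s) = ract M (ract M m r) s \<and>
         ract M (lact M r m) s = lact M r (ract M m s)) \<and>
     (\<forall>r\<in>carrier R. \<forall>m\<in>carrier M. \<forall>n\<in>carrier M.
         lact M r (m \<oplus>\<^bsub>M\<^esub> n) = lact M r m \<oplus>\<^bsub>M\<^esub> lact M r n \<and>
         ract M (m \<oplus>\<^bsub>M\<^esub> n) r = ract M m r \<oplus>\<^bsub>M\<^esub> ract M n r)"

text \<open>A bimodule homomorphism \<open>P \<otimes>_R Q \<rightarrow> R\<close> is represented (via the universal property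
of the balanced tensor product) by an R-balanced biadditive map
\<open>\<psi> p q = \<psi>(p \<otimes> q)\<close> which is compatible with the outer actions.\<close>

definition psi_hom ::
  "('r, 'm) ring_scheme \<Rightarrow> ('r, 'p, 'n1) bimod_scheme \<Rightarrow> ('r, 'q, 'n2) bimod_scheme
     \<Rightarrow> ('p \<Rightarrow> 'q \<Rightarrow> 'r) \<Rightarrow> bool" where
  "psi_hom R P Q \<psi> \<longleftrightarrow>
     (\<forall>p\<in>carrier P. \<forall>q\<in>carrier Q. \<psi> p q \<in> carrier R) \<and>
     (\<forall>p\<in>carrier P. \<forall>p'\<in>carrier P. \<forall>q\<in>carrier Q.
         \<psi> (p \<oplus>\<^bsub>P\<^esub> p') q = \<psi> p q \<oplus>\<^bsub>R\<^esub> \<psi> p' q) \<and>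
     (\<forall>p\<in>carrier P. \<forall>q\<in>carrier Q. \<forall>q'\<in>carrier Q.
         \<psi> p (q \<oplus>\<^bsub>Q\<^esub> q') = \<psi> p q \<oplus>\<^bsub>R\<^esub> \<psi> p q') \<and>
     (\<forall>r\<in>carrier R. \<forall>p\<in>carrier P. \<forall>q\<in>carrier Q.
         \<psi> (ract P p r) q = \<psi> p (lact Q r q) \<and>
         \<psi> (lact P r p) q = r \<otimes>\<^bsub>R\<^esub> \<psi> p q \<and>
         \<psi> p (ract Q q r) = \<psi> p q \<otimes>\<^bsub>R\<^esub> r)"

definition R_system ::
  "('r, 'm) ring_scheme \<Rightarrow> ('r, 'p, 'n1) bimod_scheme \<Rightarrow> ('r, 'q, 'n2) bimod_scheme
     \<Rightarrow> ('p \<Rightarrow> 'q \<Rightarrow> 'r) \<Rightarrow> bool" where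
  "R_system R P Q \<psi> \<longleftrightarrow> ring R \<and> bimodule R P \<and> bimodule R Q \<and> psi_hom R P Q \<psi>"

definition unital_R_system ::
  "('r, 'm) ring_scheme \<Rightarrow> ('r, 'p, 'n1) bimod_scheme \<Rightarrow> ('r, 'q, 'n2) bimod_scheme
     \<Rightarrow> ('p \<Rightarrow> 'q \<Rightarrow> 'r) \<Rightarrow> bool" where
  "unital_R_system R P Q \<psi> \<longleftrightarrow> R_system R P Q \<psi> \<and>
     (\<forall>p\<in>carrier P. lact P \<one>\<^bsub>R\<^esub> p = p \<and> ract P p \<one>\<^bsub>R\<^esub> = p) \<and>
     (\<forall>q\<in>carrier Q. lact Q \<one>\<^bsub>R\<^esub> q = q \<and> ract Q q \<one>\<^bsub>R\<^esub> = q)"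

inductive_set add_span :: "('a, 'm) ring_scheme \<Rightarrow> 'a set \<Rightarrow> 'a set"
  for G :: "('a, 'm) ring_scheme" and S :: "'a set" where
  zero: "\<zero>\<^bsub>G\<^esub> \<in> add_span G S"
| gen: "s \<in> S \<Longrightarrow> s \<in> add_span G S"
| add: "a \<in> add_span G S \<Longrightarrow> b \<in> add_span G S \<Longrightarrow> a \<oplus>\<^bsub>G\<^esub> b \<in> add_span G S"
| neg: "a \<in> add_span G S \<Longrightarrow> \<ominus>\<^bsub>G\<^esub> a \<in> add_span G S"

definition theta_QP :: "('r, 'q, 'n2) bimod_scheme \<Rightarrow> ('p \<Rightarrow> 'q \<Rightarrow> 'r) \<Rightarrow> 'q \<Rightarrow> 'p \<Rightarrow> 'q \<Rightarrow> 'q" where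
  "theta_QP Q \<psi> q p = restrict (\<lambda>x. ract Q q (\<psi> p x)) (carrier Q)"

definition theta_PQ :: "('r, 'p, 'n1) bimod_scheme \<Rightarrow> ('p \<Rightarrow> 'q \<Rightarrow> 'r) \<Rightarrow> 'p \<Rightarrow> 'q \<Rightarrow> 'p \<Rightarrow> 'p" where
  "theta_PQ P \<psi> p q = restrict (\<lambda>y. lact P (\<psi> y q) p) (carrier P)"

inductive_set FPQ :: "('r, 'p, 'n1) bimod_scheme \<Rightarrow> ('r, 'q, 'n2) bimod_scheme
     \<Rightarrow> ('p \<Rightarrow> 'q \<Rightarrow> 'r) \<Rightarrow> ('q \<Rightarrow> 'q) set"
  for P Q \<psi> where
  zero: "restrict (\<lambda>x. \<zero>\<^bsub>Q\<^esub>) (carrier Q) \<in> FPQ P Q \<psi>"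
| theta: "q \<in> carrier Q \<Longrightarrow> p \<in> carrier P \<Longrightarrow> theta_QP Q \<psi> q p \<in> FPQ P Q \<psi>"
| add: "f \<in> FPQ P Q \<psi> \<Longrightarrow> g \<in> FPQ P Q \<psi> \<Longrightarrow>
          restrict (\<lambda>x. f x \<oplus>\<^bsub>Q\<^esub> g x) (carrier Q) \<in> FPQ P Q \<psi>"
| neg: "f \<in> FPQ P Q \<psi> \<Longrightarrow> restrict (\<lambda>x. \<ominus>\<^bsub>Q\<^esub> f x) (carrier Q) \<in> FPQ P Q \<psi>"

inductive_set FQP :: "('r, 'p, 'n1) bimod_scheme \<Rightarrow> ('r, 'q, 'n2) bimod_scheme
     \<Rightarrow> ('p \<Rightarrow> 'q \<Rightarrow> 'r) \<Rightarrow> ('p \<Rightarrow> 'p) set"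
  for P Q \<psi> where
  zero: "restrict (\<lambda>y. \<zero>\<^bsub>P\<^esub>) (carrier P) \<in> FQP P Q \<psi>"
| theta: "p \<in> carrier P \<Longrightarrow> q \<in> carrier Q \<Longrightarrow> theta_PQ P \<psi> p q \<in> FQP P Q \<psi>"
| add: "f \<in> FQP P Q \<psi> \<Longrightarrow> g \<in> FQP P Q \<psi> \<Longrightarrow>
          restrict (\<lambda>y. f y \<oplus>\<^bsub>P\<^esub> g y) (carrier P) \<in> FQP P Q \<psi>"
| neg: "f \<in> FQP P Q \<psi> \<Longrightarrow> restrict (\<lambda>y. \<ominus>\<^bsub>P\<^esub> f y) (carrier P) \<in> FQP P Q \<psi>"

definition cond_FS' :: "('r, 'p, 'n1) bimod_scheme \<Rightarrow> ('r, 'q, 'n2) bimod_scheme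
     \<Rightarrow> ('p \<Rightarrow> 'q \<Rightarrow> 'r) \<Rightarrow> bool" where
  "cond_FS' P Q \<psi> \<longleftrightarrow>
     (\<exists>\<Theta>\<in>FPQ P Q \<psi>. \<forall>x\<in>carrier Q. \<Theta> x = x) \<and>
     (\<exists>\<Phi>\<in>FQP P Q \<psi>. \<forall>y\<in>carrier P. \<Phi> y = y)"

definition Delta :: "('r, 'q, 'n2) bimod_scheme \<Rightarrow> 'r \<Rightarrow> 'q \<Rightarrow> 'q" where
  "Delta Q r = restrict (\<lambda>q. lact Q r q) (carrier Q)"

definition psi_compatible ::
  "('r, 'm) ring_scheme \<Rightarrow> ('r, 'p, 'n1) bimod_scheme \<Rightarrow> ('r, 'q, 'n2) bimod_scheme
     \<Rightarrow> ('p \<Rightarrow> 'q \<Rightarrow> 'r) \<Rightarrow> 'r set \<Rightarrow> bool" where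
  "psi_compatible R P Q \<psi> J \<longleftrightarrow> ideal J R \<and> (\<forall>x\<in>J. Delta Q x \<in> FPQ P Q \<psi>)"

text \<open>Surjectivity of \<open>\<psi> : P \<otimes>_R Q \<rightarrow> R\<close>: the image of the tensor product is the additive
subgroup generated by the values on elementary tensors.\<close>
definition psi_surjective ::
  "('r, 'm) ring_scheme \<Rightarrow> ('r, 'p, 'n1) bimod_scheme \<Rightarrow> ('r, 'q, 'n2) bimod_scheme
     \<Rightarrow> ('p \<Rightarrow> 'q \<Rightarrow> 'r) \<Rightarrow> bool" where
  "psi_surjective R P Q \<psi> \<longleftrightarrow>
     carrier R \<subseteq> add_span R {\<psi> p q | p q. p \<in> carrier P \<and> q \<in> carrier Q}"

text \<open>Ring homomorphisms in the sense of the paper (not required to preserve units).\<close>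
definition rng_hom :: "('a, 'm) ring_scheme \<Rightarrow> ('b, 'n) ring_scheme \<Rightarrow> ('a \<Rightarrow> 'b) set" where
  "rng_hom A B = {h. h \<in> carrier A \<rightarrow> carrier B \<and>
      (\<forall>x\<in>carrier A. \<forall>y\<in>carrier A. h (x \<oplus>\<^bsub>A\<^esub> y) = h x \<oplus>\<^bsub>B\<^esub> h y \<and>
                                     h (x \<otimes>\<^bsub>A\<^esub> y) = h x \<otimes>\<^bsub>B\<^esub> h y)}"

definition cov_rep ::
  "('r, 'm) ring_scheme \<Rightarrow> ('r, 'p, 'n1) bimod_scheme \<Rightarrow> ('r, 'q, 'n2) bimod_scheme
     \<Rightarrow> ('p \<Rightarrow> 'q \<Rightarrow> 'r) \<Rightarrow> ('p \<Rightarrow> 'b) \<Rightarrow> ('q \<Rightarrow> 'b) \<Rightarrow> ('r \<Rightarrow> 'b)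
     \<Rightarrow> ('b, 'k) ring_scheme \<Rightarrow> bool" where
  "cov_rep R P Q \<psi> S T \<sigma> B \<longleftrightarrow> ring B \<and> \<sigma> \<in> rng_hom R B \<and>
     S \<in> carrier P \<rightarrow> carrier B \<and> T \<in> carrier Q \<rightarrow> carrier B \<and>
     (\<forall>p\<in>carrier P. \<forall>p'\<in>carrier P. S (p \<oplus>\<^bsub>P\<^esub> p') = S p \<oplus>\<^bsub>B\<^esub> S p') \<and>
     (\<forall>q\<in>carrier Q. \<forall>q'\<in>carrier Q. T (q \<oplus>\<^bsub>Q\<^esub> q') = T q \<oplus>\<^bsub>B\<^esub> T q') \<and>
     (\<forall>r\<in>carrier R. \<forall>p\<in>carrier P.
        S (ract P p r) = S p \<otimes>\<^bsub>B\<^esub> \<sigma> r \<and> S (lact P r p) = \<sigma> r \<otimes>\<^bsub>B\<^esub> S p) \<and>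
     (\<forall>r\<in>carrier R. \<forall>q\<in>carrier Q.
        T (ract Q q r) = T q \<otimes>\<^bsub>B\<^esub> \<sigma> r \<and> T (lact Q r q) = \<sigma> r \<otimes>\<^bsub>B\<^esub> T q) \<and>
     (\<forall>p\<in>carrier P. \<forall>q\<in>carrier Q. \<sigma> (\<psi> p q) = S p \<otimes>\<^bsub>B\<^esub> T q)"

text \<open>Universality of a covariant representation \<open>(\<iota>_P,\<iota>_Q,\<iota>_R,\<T>)\<close>: every covariant
representation (into a ring whose elements live in the same HOL type as those of \<open>\<T>\<close>)
factors uniquely through it.\<close>
definition toeplitz_rep ::
  "('r, 'm) ring_scheme \<Rightarrow> ('r, 'p, 'n1) bimod_scheme \<Rightarrow> ('r, 'q, 'n2) bimod_scheme
     \<Rightarrow> ('p \<Rightarrow> 'q \<Rightarrow> 'r) \<Rightarrow> ('p \<Rightarrow> 't) \<Rightarrow> ('q \<Rightarrow> 't) \<Rightarrow> ('r \<Rightarrow> 't)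
     \<Rightarrow> 't ring \<Rightarrow> bool" where
  "toeplitz_rep R P Q \<psi> iP iQ iR TT \<longleftrightarrow> cov_rep R P Q \<psi> iP iQ iR TT \<and>
     (\<forall>(B :: 't ring) S T \<sigma>. cov_rep R P Q \<psi> S T \<sigma> B \<longrightarrow>
        (\<exists>\<phi>\<in>rng_hom TT B.
           (\<forall>p\<in>carrier P. \<phi> (iP p) = S p) \<and> (\<forall>q\<in>carrier Q. \<phi> (iQ q) = T q) \<and>
           (\<forall>r\<in>carrier R. \<phi> (iR r) = \<sigma> r) \<and>
           (\<forall>\<phi>'\<in>rng_hom TT B.
              (\<forall>p\<in>carrier P. \<phi>' (iP p) = S p) \<and> (\<forall>q\<in>carrier Q. \<phi>' (iQ q) = T q) \<and>
              (\<forall>r\<in>carrier R. \<phi>' (iR r) = \<sigma> r) \<longrightarrow> (\<forall>x\<in>carrier TT. \<phi>' x = \<phi> x))))"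

text \<open>Graph of \<open>\<pi>_{T,S} : \<F>_P(Q) \<rightarrow> B\<close>, determined by \<open>\<pi>(\<theta>_{q,p}) = T(q)S(p)\<close> and additivity
(the paper asserts that this is a well-defined ring homomorphism).\<close>
inductive_set pi_graph :: "('r, 'p, 'n1) bimod_scheme \<Rightarrow> ('r, 'q, 'n2) bimod_scheme
     \<Rightarrow> ('p \<Rightarrow> 'q \<Rightarrow> 'r) \<Rightarrow> ('q \<Rightarrow> 'b) \<Rightarrow> ('p \<Rightarrow> 'b) \<Rightarrow> ('b, 'k) ring_scheme
     \<Rightarrow> (('q \<Rightarrow> 'q) \<times> 'b) set"
  for P Q \<psi> T S B where
  zero: "(restrict (\<lambda>x. \<zero>\<^bsub>Q\<^esub>) (carrier Q), \<zero>\<^bsub>B\<^esub>) \<in> pi_graph P Q \<psi> T S B"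
| theta: "q \<in> carrier Q \<Longrightarrow> p \<in> carrier P \<Longrightarrow>
           (theta_QP Q \<psi> q p, T q \<otimes>\<^bsub>B\<^esub> S p) \<in> pi_graph P Q \<psi> T S B"
| add: "(f, b) \<in> pi_graph P Q \<psi> T S B \<Longrightarrow> (g, c) \<in> pi_graph P Q \<psi> T S B \<Longrightarrow>
          (restrict (\<lambda>x. f x \<oplus>\<^bsub>Q\<^esub> g x) (carrier Q), b \<oplus>\<^bsub>B\<^esub> c) \<in> pi_graph P Q \<psi> T S B"
| neg: "(f, b) \<in> pi_graph P Q \<psi> T S B \<Longrightarrow>
          (restrict (\<lambda>x. \<ominus>\<^bsub>Q\<^esub> f x) (carrier Q), \<ominus>\<^bsub>B\<^esub> b) \<in> pi_graph P Q \<psi> T S B"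

definition list_prod :: "('a, 'm) ring_scheme \<Rightarrow> 'a list \<Rightarrow> 'a" where
  "list_prod B xs = foldr (\<lambda>x a. x \<otimes>\<^bsub>B\<^esub> a) xs \<one>\<^bsub>B\<^esub>"

text \<open>\<open>\<iota>^n(x_1 \<otimes> \<dots> \<otimes> x_n) = \<iota>(x_1)\<cdots>\<iota>(x_n)\<close>, and \<open>\<iota>^0 = \<iota>_R\<close> on \<open>X^{\<otimes>0} = R\<close>
(the element \<open>r\<close> is only used when the list is empty).\<close>
definition iota_pow :: "('t, 'm) ring_scheme \<Rightarrow> ('r \<Rightarrow> 't) \<Rightarrow> ('x \<Rightarrow> 't) \<Rightarrow> 'x list \<Rightarrow> 'r \<Rightarrow> 't" where
  "iota_pow TT iR iX xs r = (if xs = [] then iR r else list_prod TT (map iX xs))"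

text \<open>Generators of \<open>\<T>_i\<close> (elementary tensors suffice, since general tensors are sums of them).\<close>
definition toeplitz_gens ::
  "('r, 'm) ring_scheme \<Rightarrow> ('r, 'p, 'n1) bimod_scheme \<Rightarrow> ('r, 'q, 'n2) bimod_scheme
     \<Rightarrow> ('p \<Rightarrow> 't) \<Rightarrow> ('q \<Rightarrow> 't) \<Rightarrow> ('r \<Rightarrow> 't) \<Rightarrow> 't ring \<Rightarrow> int \<Rightarrow> 't set" where
  "toeplitz_gens R P Q iP iQ iR TT i =
     {iota_pow TT iR iQ qs r1 \<otimes>\<^bsub>TT\<^esub> iota_pow TT iR iP ps r2 | qs ps r1 r2.
        set qs \<subseteq> carrier Q \<and> set ps \<subseteq> carrier P \<and> r1 \<in> carrier R \<and> r2 \<in> carrier R \<and>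
        int (length qs) - int (length ps) = i}
   \<union> {iR r \<otimes>\<^bsub>TT\<^esub> (iota_pow TT iR iQ qs r1 \<otimes>\<^bsub>TT\<^esub> iota_pow TT iR iP ps r2) | r qs ps r1 r2.
        r \<in> carrier R \<and> set qs \<subseteq> carrier Q \<and> set ps \<subseteq> carrier P \<and> r1 \<in> carrier R \<and>
        r2 \<in> carrier R \<and> int (length qs) - int (length ps) = i}"

definition toeplitz_grading ::
  "('r, 'm) ring_scheme \<Rightarrow> ('r, 'p, 'n1) bimod_scheme \<Rightarrow> ('r, 'q, 'n2) bimod_scheme
     \<Rightarrow> ('p \<Rightarrow> 't) \<Rightarrow> ('q \<Rightarrow> 't) \<Rightarrow> ('r \<Rightarrow> 't) \<Rightarrow> 't ring \<Rightarrow> int \<Rightarrow> 't set" where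
  "toeplitz_grading R P Q iP iQ iR TT i = add_span TT (toeplitz_gens R P Q iP iQ iR TT i)"

definition TJ_ideal ::
  "('r, 'm) ring_scheme \<Rightarrow> ('r, 'p, 'n1) bimod_scheme \<Rightarrow> ('r, 'q, 'n2) bimod_scheme
     \<Rightarrow> ('p \<Rightarrow> 'q \<Rightarrow> 'r) \<Rightarrow> ('p \<Rightarrow> 't) \<Rightarrow> ('q \<Rightarrow> 't) \<Rightarrow> ('r \<Rightarrow> 't) \<Rightarrow> 't ring
     \<Rightarrow> 'r set \<Rightarrow> 't set" where
  "TJ_ideal R P Q \<psi> iP iQ iR TT J =
     genideal TT {iR x \<ominus>\<^bsub>TT\<^esub> b | x b. x \<in> J \<and> (Delta Q x, b) \<in> pi_graph P Q \<psi> iQ iP TT}"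

definition rel_CP_ring ::
  "('r, 'm) ring_scheme \<Rightarrow> ('r, 'p, 'n1) bimod_scheme \<Rightarrow> ('r, 'q, 'n2) bimod_scheme
     \<Rightarrow> ('p \<Rightarrow> 'q \<Rightarrow> 'r) \<Rightarrow> ('p \<Rightarrow> 't) \<Rightarrow> ('q \<Rightarrow> 't) \<Rightarrow> ('r \<Rightarrow> 't) \<Rightarrow> 't ring
     \<Rightarrow> 'r set \<Rightarrow> 't set ring" where
  "rel_CP_ring R P Q \<psi> iP iQ iR TT J = TT Quot (TJ_ideal R P Q \<psi> iP iQ iR TT J)"

definition rel_CP_grading ::
  "('r, 'm) ring_scheme \<Rightarrow> ('r, 'p, 'n1) bimod_scheme \<Rightarrow> ('r, 'q, 'n2) bimod_scheme
     \<Rightarrow> ('p \<Rightarrow> 'q \<Rightarrow> 'r) \<Rightarrow> ('p \<Rightarrow> 't) \<Rightarrow> ('q \<Rightarrow> 't) \<Rightarrow> ('r \<Rightarrow> 't) \<Rightarrow> 't ring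
     \<Rightarrow> 'r set \<Rightarrow> int \<Rightarrow> 't set set" where
  "rel_CP_grading R P Q \<psi> iP iQ iR TT J i =
     (\<lambda>x. TJ_ideal R P Q \<psi> iP iQ iR TT J +>\<^bsub>TT\<^esub> x) ` toeplitz_grading R P Q iP iQ iR TT i"

definition strongly_graded :: "('a, 'm) ring_scheme \<Rightarrow> (int \<Rightarrow> 'a set) \<Rightarrow> bool" where
  "strongly_graded B Bs \<longleftrightarrow>
     (\<forall>m n. add_span B {x \<otimes>\<^bsub>B\<^esub> y | x y. x \<in> Bs m \<and> y \<in> Bs n} = Bs (m + n))"

end

theory Submission
  imports Defs
begin


lemma add_span_sub:
  assumes "\<zero>\<^bsub>G\<^esub> \<in> H" "S \<subseteq> H" "\<And>a b. a \<in> H \<Longrightarrow> b \<in> H \<Longrightarrow> a \<oplus>\<^bsub>G\<^esub> b \<in> H"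
    "\<And>a. a \<in> H \<Longrightarrow> \<ominus>\<^bsub>G\<^esub> a \<in> H"
  shows "add_span G S \<subseteq> H"
proof
  fix x assume "x \<in> add_span G S" then show "x \<in> H"
    by induction (use assms in auto)
qed

context ring begin

lemma add_span_carrier: "S \<subseteq> carrier R \<Longrightarrow> add_span R S \<subseteq> carrier R"
  by (rule add_span_sub) auto

definition SP :: "(int \<Rightarrow> 'a set) \<Rightarrow> int \<Rightarrow> int \<Rightarrow> 'a set" where
  "SP G m n = add_span R {x \<otimes> y | x y. x \<in> G m \<and> y \<in> G n}"

lemma SP_carrier: "(\<And>i. G i \<subseteq> carrier R) \<Longrightarrow> SP G m n \<subseteq> carrier R"
  unfolding SP_def by (rule add_span_carrier) auto

lemma SP_right:
  assumes GC: "\<And>i. G i \<subseteq> carrier R"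
    and GM: "\<And>a b x y. x \<in> G a \<Longrightarrow> y \<in> G b \<Longrightarrow> x \<otimes> y \<in> G (a + b)"
    and z: "z \<in> SP G a b" and w: "w \<in> G c"
  shows "z \<otimes> w \<in> SP G a (b + c)"
  using z unfolding SP_def
proof induction
  case zero
  have "w \<in> carrier R" using w GC by auto
  then show ?case by (simp add: add_span.zero)
next
  case (gen s)
  then obtain x y where s: "s = x \<otimes> y" "x \<in> G a" "y \<in> G b" by auto
  have c: "x \<in> carrier R" "y \<in> carrier R" "w \<in> carrier R" using s w GC by auto
  have "s \<otimes> w = x \<otimes> (y \<otimes> w)" using c s by (simp add: m_assoc)
  moreover have "y \<otimes> w \<in> G (b + c)" using GM s w by auto
  ultimately show ?case using s by (auto intro!: add_span.gen)
next
  case (add u v)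
  have c: "u \<in> carrier R" "v \<in> carrier R" "w \<in> carrier R"
    using add.hyps w GC add_span_carrier[of "{x \<otimes> y | x y. x \<in> G a \<and> y \<in> G b}"] by auto
  then show ?case using add.IH by (simp add: l_distr add_span.add)
next
  case (neg u)
  have c: "u \<in> carrier R" "w \<in> carrier R"
    using neg.hyps w GC add_span_carrier[of "{x \<otimes> y | x y. x \<in> G a \<and> y \<in> G b}"] by auto
  then show ?case using neg.IH by (simp add: l_minus add_span.neg)
qed

lemma SP_left:
  assumes GC: "\<And>i. G i \<subseteq> carrier R"
    and GM: "\<And>a b x y. x \<in> G a \<Longrightarrow> y \<in> G b \<Longrightarrow> x \<otimes> y \<in> G (a + b)"
    and z: "z \<in> SP G a b" and w: "w \<in> G c"
  shows "w \<otimes> z \<in> SP G (c + a) b"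
  using z unfolding SP_def
proof induction
  case zero
  have "w \<in> carrier R" using w GC by auto
  then show ?case by (simp add: add_span.zero)
next
  case (gen s)
  then obtain x y where s: "s = x \<otimes> y" "x \<in> G a" "y \<in> G b" by auto
  have c: "x \<in> carrier R" "y \<in> carrier R" "w \<in> carrier R" using s w GC by auto
  have "w \<otimes> s = (w \<otimes> x) \<otimes> y" using c s by (simp add: m_assoc)
  moreover have "w \<otimes> x \<in> G (c + a)" using GM s w by auto
  ultimately show ?case using s by (auto intro!: add_span.gen)
next
  case (add u v)
  have c: "u \<in> carrier R" "v \<in> carrier R" "w \<in> carrier R"
    using add.hyps w GC add_span_carrier[of "{x \<otimes> y | x y. x \<in> G a \<and> y \<in> G b}"] by auto
  then show ?case using add.IH by (simp add: r_distr add_span.add)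
next
  case (neg u)
  have c: "u \<in> carrier R" "w \<in> carrier R"
    using neg.hyps w GC add_span_carrier[of "{x \<otimes> y | x y. x \<in> G a \<and> y \<in> G b}"] by auto
  then show ?case using neg.IH by (simp add: r_minus add_span.neg)
qed

lemma SP_closed:
  "\<zero> \<in> SP G m n" "u \<in> SP G m n \<Longrightarrow> v \<in> SP G m n \<Longrightarrow> u \<oplus> v \<in> SP G m n"
  "u \<in> SP G m n \<Longrightarrow> \<ominus> u \<in> SP G m n"
  unfolding SP_def by (auto intro: add_span.intros)

lemma SP_shift:
  assumes GC: "\<And>i. G i \<subseteq> carrier R"
    and GM: "\<And>a b x y. x \<in> G a \<Longrightarrow> y \<in> G b \<Longrightarrow> x \<otimes> y \<in> G (a + b)"
    and e: "e \<in> SP G c d" and eu: "\<And>i x. x \<in> G i \<Longrightarrow> x \<otimes> e = x"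
    and z: "z \<in> SP G a b"
  shows "z \<in> SP G (a + c) (d + b)"
proof -
  have "add_span R {x \<otimes> y | x y. x \<in> G a \<and> y \<in> G b} \<subseteq> SP G (a + c) (d + b)"
  proof (rule add_span_sub)
    show "{x \<otimes> y | x y. x \<in> G a \<and> y \<in> G b} \<subseteq> SP G (a + c) (d + b)"
    proof clarify
      fix x y assume xy: "x \<in> G a" "y \<in> G b"
      have "x \<otimes> e \<in> SP G (a + c) d" using SP_left[OF GC GM e xy(1)] .
      then have "(x \<otimes> e) \<otimes> y \<in> SP G (a + c) (d + b)" using SP_right[OF GC GM _ xy(2)] by blast
      then show "x \<otimes> y \<in> SP G (a + c) (d + b)" using eu[OF xy(1)] by simp
    qed
  qed (auto intro: SP_closed)
  then show ?thesis using z unfolding SP_def by auto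
qed

lemma strongly_graded_abstract:
  assumes GC: "\<And>i. G i \<subseteq> carrier R"
    and GM: "\<And>a b x y. x \<in> G a \<Longrightarrow> y \<in> G b \<Longrightarrow> x \<otimes> y \<in> G (a + b)"
    and G0: "\<And>i. \<zero> \<in> G i"
    and Gadd: "\<And>i x y. x \<in> G i \<Longrightarrow> y \<in> G i \<Longrightarrow> x \<oplus> y \<in> G i"
    and Gneg: "\<And>i x. x \<in> G i \<Longrightarrow> \<ominus> x \<in> G i"
    and e0: "e \<in> G 0"
    and eul: "\<And>i x. x \<in> G i \<Longrightarrow> e \<otimes> x = x"
    and eur: "\<And>i x. x \<in> G i \<Longrightarrow> x \<otimes> e = x"
    and e1: "e \<in> SP G 1 (-1)" and e2: "e \<in> SP G (-1) 1"
  shows "strongly_graded R G"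
proof -
  have pos: "e \<in> SP G (int k) (- int k)" for k :: nat
  proof (induction k)
    case 0
    have "e \<otimes> e \<in> SP G 0 0" unfolding SP_def using e0 by (auto intro!: add_span.gen)
    then show ?case using eul[OF e0] by simp
  next
    case (Suc k)
    from SP_shift[OF GC GM e1 eur Suc] show ?case by (simp add: algebra_simps)
  qed
  have neg: "e \<in> SP G (- int k) (int k)" for k :: nat
  proof (induction k)
    case 0
    have "e \<otimes> e \<in> SP G 0 0" unfolding SP_def using e0 by (auto intro!: add_span.gen)
    then show ?case using eul[OF e0] by simp
  next
    case (Suc k)
    from SP_shift[OF GC GM e2 eur Suc] show ?case by (simp add: algebra_simps)
  qed
  have all: "e \<in> SP G k (- k)" for k :: int
  proof (cases "k \<ge> 0")
    case True
    then show ?thesis using pos[of "nat k"] by simp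
  next
    case False
    then show ?thesis using neg[of "nat (-k)"] by simp
  qed
  show ?thesis unfolding strongly_graded_def
  proof (intro allI equalityI)
    fix m n
    show "add_span R {x \<otimes> y | x y. x \<in> G m \<and> y \<in> G n} \<subseteq> G (m + n)"
      by (rule add_span_sub) (use G0 Gadd Gneg GM in auto)
    show "G (m + n) \<subseteq> add_span R {x \<otimes> y | x y. x \<in> G m \<and> y \<in> G n}"
    proof
      fix g assume g: "g \<in> G (m + n)"
      have "e \<otimes> g \<in> SP G m (- m + (m + n))" by (rule SP_right[OF GC GM all g])
      then show "g \<in> add_span R {x \<otimes> y | x y. x \<in> G m \<and> y \<in> G n}"
        using eul[OF g] unfolding SP_def by simp
    qed
  qed
qed

end



locale tsys =
  fixes R :: "'r ring" and P :: "('r, 'p) bimod" and Q :: "('r, 'q) bimod"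
    and psi :: "'p \<Rightarrow> 'q \<Rightarrow> 'r"
    and iP :: "'p \<Rightarrow> 't" and iQ :: "'q \<Rightarrow> 't" and iR :: "'r \<Rightarrow> 't"
    and TT :: "'t ring"
  assumes us: "unital_R_system R P Q psi"
    and cr: "cov_rep R P Q psi iP iQ iR TT"
begin

lemma ringR: "ring R" using us unfolding unital_R_system_def R_system_def by auto
lemma ringT: "ring TT" using cr unfolding cov_rep_def by auto

sublocale R: ring R by (rule ringR)
sublocale T: ring TT by (rule ringT)

lemma bP: "bimodule R P" and bQ: "bimodule R Q" and ph: "psi_hom R P Q psi"
  using us unfolding unital_R_system_def R_system_def by auto

lemma P_closed[simp]: "r \<in> carrier R \<Longrightarrow> p \<in> carrier P \<Longrightarrow> lact P r p \<in> carrier P"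
   "r \<in> carrier R \<Longrightarrow> p \<in> carrier P \<Longrightarrow> ract P p r \<in> carrier P"
  using bP unfolding bimodule_def by auto
lemma Q_closed[simp]: "r \<in> carrier R \<Longrightarrow> q \<in> carrier Q \<Longrightarrow> lact Q r q \<in> carrier Q"
   "r \<in> carrier R \<Longrightarrow> q \<in> carrier Q \<Longrightarrow> ract Q q r \<in> carrier Q"
  using bQ unfolding bimodule_def by auto
lemma psi_closed[simp]: "p \<in> carrier P \<Longrightarrow> q \<in> carrier Q \<Longrightarrow> psi p q \<in> carrier R"
  using ph unfolding psi_hom_def by auto
lemma unitP[simp]: "p \<in> carrier P \<Longrightarrow> lact P \<one>\<^bsub>R\<^esub> p = p" "p \<in> carrier P \<Longrightarrow> ract P p \<one>\<^bsub>R\<^esub> = p"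
  using us unfolding unital_R_system_def by auto
lemma unitQ[simp]: "q \<in> carrier Q \<Longrightarrow> lact Q \<one>\<^bsub>R\<^esub> q = q" "q \<in> carrier Q \<Longrightarrow> ract Q q \<one>\<^bsub>R\<^esub> = q"
  using us unfolding unital_R_system_def by auto

lemma iR_hom: "iR \<in> rng_hom R TT" using cr unfolding cov_rep_def by auto

lemma iP_c[simp]: "p \<in> carrier P \<Longrightarrow> iP p \<in> carrier TT"
  and iQ_c[simp]: "q \<in> carrier Q \<Longrightarrow> iQ q \<in> carrier TT"
  and iR_c[simp]: "r \<in> carrier R \<Longrightarrow> iR r \<in> carrier TT"
  using cr iR_hom unfolding cov_rep_def rng_hom_def by auto

lemma iR_add: "r \<in> carrier R \<Longrightarrow> s \<in> carrier R \<Longrightarrow> iR (r \<oplus>\<^bsub>R\<^esub> s) = iR r \<oplus>\<^bsub>TT\<^esub> iR s"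
  and iR_mult: "r \<in> carrier R \<Longrightarrow> s \<in> carrier R \<Longrightarrow> iR (r \<otimes>\<^bsub>R\<^esub> s) = iR r \<otimes>\<^bsub>TT\<^esub> iR s"
  using iR_hom unfolding rng_hom_def by auto

lemma iR_zero: "iR \<zero>\<^bsub>R\<^esub> = \<zero>\<^bsub>TT\<^esub>"
proof -
  have "iR \<zero>\<^bsub>R\<^esub> \<oplus>\<^bsub>TT\<^esub> iR \<zero>\<^bsub>R\<^esub> = iR \<zero>\<^bsub>R\<^esub> \<oplus>\<^bsub>TT\<^esub> \<zero>\<^bsub>TT\<^esub>"
    using iR_add[of "\<zero>\<^bsub>R\<^esub>" "\<zero>\<^bsub>R\<^esub>"] by simp
  then show ?thesis using T.add.l_cancel by (metis R.zero_closed T.zero_closed iR_c)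
qed

lemma iR_neg: "r \<in> carrier R \<Longrightarrow> iR (\<ominus>\<^bsub>R\<^esub> r) = \<ominus>\<^bsub>TT\<^esub> iR r"
proof -
  assume r: "r \<in> carrier R"
  have "iR r \<oplus>\<^bsub>TT\<^esub> iR (\<ominus>\<^bsub>R\<^esub> r) = \<zero>\<^bsub>TT\<^esub>"
    using iR_add[of r "\<ominus>\<^bsub>R\<^esub> r"] r iR_zero by (simp add: R.r_neg)
  then show ?thesis using r
    by (metis R.a_inv_closed T.add.inv_comm T.add.inv_equality T.add.m_comm iR_c)
qed

lemma iP_ract: "r \<in> carrier R \<Longrightarrow> p \<in> carrier P \<Longrightarrow> iP (ract P p r) = iP p \<otimes>\<^bsub>TT\<^esub> iR r"
  and iP_lact: "r \<in> carrier R \<Longrightarrow> p \<in> carrier P \<Longrightarrow> iP (lact P r p) = iR r \<otimes>\<^bsub>TT\<^esub> iP p"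
  and iQ_ract: "r \<in> carrier R \<Longrightarrow> q \<in> carrier Q \<Longrightarrow> iQ (ract Q q r) = iQ q \<otimes>\<^bsub>TT\<^esub> iR r"
  and iQ_lact: "r \<in> carrier R \<Longrightarrow> q \<in> carrier Q \<Longrightarrow> iQ (lact Q r q) = iR r \<otimes>\<^bsub>TT\<^esub> iQ q"
  and psi_rel: "p \<in> carrier P \<Longrightarrow> q \<in> carrier Q \<Longrightarrow> iR (psi p q) = iP p \<otimes>\<^bsub>TT\<^esub> iQ q"
  using cr unfolding cov_rep_def by auto

lemma list_prod_Nil[simp]: "list_prod B [] = \<one>\<^bsub>B\<^esub>"
  and list_prod_Cons[simp]: "list_prod B (x # xs) = x \<otimes>\<^bsub>B\<^esub> list_prod B xs"
  unfolding list_prod_def by auto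

lemma list_prod_c[simp]: "set xs \<subseteq> carrier TT \<Longrightarrow> list_prod TT xs \<in> carrier TT"
  by (induction xs) auto

lemma LQ_c[simp]: "set qs \<subseteq> carrier Q \<Longrightarrow> list_prod TT (map iQ qs) \<in> carrier TT"
  by (rule list_prod_c) auto
lemma LP_c[simp]: "set ps \<subseteq> carrier P \<Longrightarrow> list_prod TT (map iP ps) \<in> carrier TT"
  by (rule list_prod_c) auto

lemma ipQ_c[simp]: "set qs \<subseteq> carrier Q \<Longrightarrow> r \<in> carrier R \<Longrightarrow> iota_pow TT iR iQ qs r \<in> carrier TT"
  unfolding iota_pow_def by auto
lemma ipP_c[simp]: "set ps \<subseteq> carrier P \<Longrightarrow> r \<in> carrier R \<Longrightarrow> iota_pow TT iR iP ps r \<in> carrier TT"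
  unfolding iota_pow_def by auto

abbreviation "GS i \<equiv> toeplitz_gens R P Q iP iQ iR TT i"
abbreviation "TG i \<equiv> toeplitz_grading R P Q iP iQ iR TT i"
abbreviation "HH qs r1 ps r2 \<equiv> iota_pow TT iR iQ qs r1 \<otimes>\<^bsub>TT\<^esub> iota_pow TT iR iP ps r2"

lemma gen1:
  "set qs \<subseteq> carrier Q \<Longrightarrow> set ps \<subseteq> carrier P \<Longrightarrow> r1 \<in> carrier R \<Longrightarrow> r2 \<in> carrier R \<Longrightarrow>
   i = int (length qs) - int (length ps) \<Longrightarrow> HH qs r1 ps r2 \<in> TG i"
  unfolding toeplitz_grading_def toeplitz_gens_def by (rule add_span.gen) blast

lemma gen2:
  "r \<in> carrier R \<Longrightarrow> set qs \<subseteq> carrier Q \<Longrightarrow> set ps \<subseteq> carrier P \<Longrightarrow> r1 \<in> carrier R \<Longrightarrow> r2 \<in> carrier R \<Longrightarrow>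
   i = int (length qs) - int (length ps) \<Longrightarrow> iR r \<otimes>\<^bsub>TT\<^esub> HH qs r1 ps r2 \<in> TG i"
  unfolding toeplitz_grading_def toeplitz_gens_def by (rule add_span.gen) blast

lemma gensE:
  assumes "g \<in> GS i"
  obtains qs ps r1 r2 where "g = HH qs r1 ps r2" "set qs \<subseteq> carrier Q" "set ps \<subseteq> carrier P"
     "r1 \<in> carrier R" "r2 \<in> carrier R" "i = int (length qs) - int (length ps)"
  | r qs ps r1 r2 where "g = iR r \<otimes>\<^bsub>TT\<^esub> HH qs r1 ps r2" "r \<in> carrier R" "set qs \<subseteq> carrier Q" "set ps \<subseteq> carrier P"
     "r1 \<in> carrier R" "r2 \<in> carrier R" "i = int (length qs) - int (length ps)"
  using assms unfolding toeplitz_gens_def by blast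

lemma GS_c: "GS i \<subseteq> carrier TT"
proof
  fix g assume "g \<in> GS i" then show "g \<in> carrier TT" by (cases rule: gensE) auto
qed

lemma TG_c: "TG i \<subseteq> carrier TT"
  unfolding toeplitz_grading_def using GS_c by (rule T.add_span_carrier)

lemma TG_cI[simp]: "h \<in> TG i \<Longrightarrow> h \<in> carrier TT" using TG_c by auto

lemma TG_closed: "\<zero>\<^bsub>TT\<^esub> \<in> TG i" "x \<in> TG i \<Longrightarrow> y \<in> TG i \<Longrightarrow> x \<oplus>\<^bsub>TT\<^esub> y \<in> TG i"
  "x \<in> TG i \<Longrightarrow> \<ominus>\<^bsub>TT\<^esub> x \<in> TG i"
  unfolding toeplitz_grading_def by (auto intro: add_span.intros)

lemma lift_left:
  assumes x: "x \<in> carrier TT" and g: "\<And>g. g \<in> GS i \<Longrightarrow> x \<otimes>\<^bsub>TT\<^esub> g \<in> TG j" and h: "h \<in> TG i"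
  shows "x \<otimes>\<^bsub>TT\<^esub> h \<in> TG j"
  using h unfolding toeplitz_grading_def
proof induction
  case zero then show ?case using x TG_closed(1) by (simp add: toeplitz_grading_def)
next
  case (gen s) then show ?case using g by (simp add: toeplitz_grading_def)
next
  case (add a b)
  have "a \<in> carrier TT" "b \<in> carrier TT" using add.hyps GS_c T.add_span_carrier by blast+
  then show ?case using add.IH x TG_closed(2) by (simp add: T.r_distr toeplitz_grading_def)
next
  case (neg a)
  have "a \<in> carrier TT" using neg.hyps GS_c T.add_span_carrier by blast+
  then show ?case using neg.IH x TG_closed(3) by (simp add: T.r_minus toeplitz_grading_def)
qed

end



context tsys begin

lemma leftR_gen: "r \<in> carrier R \<Longrightarrow> g \<in> GS i \<Longrightarrow> iR r \<otimes>\<^bsub>TT\<^esub> g \<in> TG i"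
proof -
  assume r: "r \<in> carrier R" and g: "g \<in> GS i"
  from g show ?thesis
  proof (cases rule: gensE)
    case (1 qs ps r1 r2) then show ?thesis using r by (auto intro!: gen2)
  next
    case (2 r' qs ps r1 r2)
    have "iR r \<otimes>\<^bsub>TT\<^esub> g = iR (r \<otimes>\<^bsub>R\<^esub> r') \<otimes>\<^bsub>TT\<^esub> HH qs r1 ps r2"
      using 2 r by (simp add: iR_mult T.m_assoc)
    then show ?thesis using 2 r by (auto intro!: gen2)
  qed
qed

lemma leftR: "r \<in> carrier R \<Longrightarrow> h \<in> TG i \<Longrightarrow> iR r \<otimes>\<^bsub>TT\<^esub> h \<in> TG i"
  by (rule lift_left) (auto intro: leftR_gen)

lemma leftQ_H:
  assumes q: "q \<in> carrier Q" and c: "set qs \<subseteq> carrier Q" "set ps \<subseteq> carrier P"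
     "r1 \<in> carrier R" "r2 \<in> carrier R"
  shows "iQ q \<otimes>\<^bsub>TT\<^esub> HH qs r1 ps r2 \<in> TG (int (length qs) - int (length ps) + 1)"
proof (cases qs)
  case Nil
  let ?X = "iota_pow TT iR iP ps r2"
  have X: "?X \<in> carrier TT" using c by simp
  have "iQ q \<otimes>\<^bsub>TT\<^esub> HH qs r1 ps r2 = iQ (ract Q q r1) \<otimes>\<^bsub>TT\<^esub> ?X"
    using Nil q c X by (simp add: iota_pow_def T.m_assoc[symmetric] iQ_ract)
  also have "\<dots> = HH [ract Q q r1] r1 ps r2" using q c by (simp add: iota_pow_def)
  finally show ?thesis using Nil q c by (auto intro!: gen1)
next
  case (Cons q1 qs')
  let ?X = "iota_pow TT iR iP ps r2"
  have X: "?X \<in> carrier TT" using c by simp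
  have "iQ q \<otimes>\<^bsub>TT\<^esub> HH qs r1 ps r2 = HH (q # qs) r1 ps r2"
    using Cons q c X by (simp add: iota_pow_def T.m_assoc[symmetric])
  then show ?thesis using Cons q c by (auto intro!: gen1)
qed

lemma leftP_H:
  assumes p: "p \<in> carrier P" and c: "set qs \<subseteq> carrier Q" "set ps \<subseteq> carrier P"
     "r1 \<in> carrier R" "r2 \<in> carrier R"
  shows "iP p \<otimes>\<^bsub>TT\<^esub> HH qs r1 ps r2 \<in> TG (int (length qs) - int (length ps) - 1)"
proof (cases qs)
  case Nil
  note qs = Nil
  let ?p' = "ract P p r1"
  have p': "?p' \<in> carrier P" using p c by simp
  show ?thesis
  proof (cases ps)
    case Nil
    let ?p'' = "ract P ?p' r2"
    have "iP p \<otimes>\<^bsub>TT\<^esub> HH qs r1 ps r2 = iP ?p''"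
      using qs Nil p c p' by (simp add: iota_pow_def T.m_assoc[symmetric] iP_ract)
    also have "\<dots> = HH [] \<one>\<^bsub>R\<^esub> [?p''] r2"
      using p' c by (simp add: iota_pow_def iP_lact[symmetric])
    finally show ?thesis using qs Nil p' c by (auto intro!: gen1)
  next
    case (Cons p1 ps')
    have "iP p \<otimes>\<^bsub>TT\<^esub> HH qs r1 ps r2 = iP ?p' \<otimes>\<^bsub>TT\<^esub> list_prod TT (map iP ps)"
      using qs Cons p c p' by (simp add: iota_pow_def T.m_assoc[symmetric] iP_ract)
    also have "\<dots> = HH [] \<one>\<^bsub>R\<^esub> (?p' # ps) r2"
      using p' c Cons by (simp add: iota_pow_def T.m_assoc[symmetric] iP_lact[symmetric])
    finally show ?thesis using qs Cons p' c by (auto intro!: gen1)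
  qed
next
  case (Cons q1 qs')
  let ?X = "iota_pow TT iR iP ps r2"
  let ?s = "psi p q1"
  have X: "?X \<in> carrier TT" using c by simp
  have q1: "q1 \<in> carrier Q" "set qs' \<subseteq> carrier Q" using Cons c by auto
  have e1: "iP p \<otimes>\<^bsub>TT\<^esub> HH qs r1 ps r2 = iR ?s \<otimes>\<^bsub>TT\<^esub> (list_prod TT (map iQ qs') \<otimes>\<^bsub>TT\<^esub> ?X)"
    using Cons p q1 X by (simp add: iota_pow_def T.m_assoc psi_rel)
  show ?thesis
  proof (cases qs')
    case Nil
    have "iP p \<otimes>\<^bsub>TT\<^esub> HH qs r1 ps r2 = HH [] ?s ps r2"
      using e1 Nil p q1 X by (simp add: iota_pow_def)
    then show ?thesis using Cons Nil p q1 c by (auto intro!: gen1)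
  next
    case (Cons q2 qs'')
    have "iP p \<otimes>\<^bsub>TT\<^esub> HH qs r1 ps r2 = iR ?s \<otimes>\<^bsub>TT\<^esub> HH qs' r1 ps r2"
      using e1 Cons by (simp add: iota_pow_def)
    then show ?thesis using Cons \<open>qs = q1 # qs'\<close> p q1 c by (auto intro!: gen2)
  qed
qed

lemma leftQ: "q \<in> carrier Q \<Longrightarrow> h \<in> TG i \<Longrightarrow> iQ q \<otimes>\<^bsub>TT\<^esub> h \<in> TG (i + 1)"
proof (rule lift_left)
  fix g assume q: "q \<in> carrier Q" and g: "g \<in> GS i"
  from g show "iQ q \<otimes>\<^bsub>TT\<^esub> g \<in> TG (i + 1)"
  proof (cases rule: gensE)
    case (1 qs ps r1 r2) then show ?thesis using q leftQ_H by simp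
  next
    case (2 r qs ps r1 r2)
    have "iQ q \<otimes>\<^bsub>TT\<^esub> g = iQ (ract Q q r) \<otimes>\<^bsub>TT\<^esub> HH qs r1 ps r2"
      using 2 q by (simp add: iQ_ract T.m_assoc)
    then show ?thesis using 2 q leftQ_H by simp
  qed
qed simp

lemma leftP: "p \<in> carrier P \<Longrightarrow> h \<in> TG i \<Longrightarrow> iP p \<otimes>\<^bsub>TT\<^esub> h \<in> TG (i - 1)"
proof (rule lift_left)
  fix g assume p: "p \<in> carrier P" and g: "g \<in> GS i"
  from g show "iP p \<otimes>\<^bsub>TT\<^esub> g \<in> TG (i - 1)"
  proof (cases rule: gensE)
    case (1 qs ps r1 r2) then show ?thesis using p leftP_H by simp
  next
    case (2 r qs ps r1 r2)
    have "iP p \<otimes>\<^bsub>TT\<^esub> g = iP (ract P p r) \<otimes>\<^bsub>TT\<^esub> HH qs r1 ps r2"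
      using 2 p by (simp add: iP_ract T.m_assoc)
    then show ?thesis using 2 p leftP_H by simp
  qed
qed simp

lemma leftLQ: "set qs \<subseteq> carrier Q \<Longrightarrow> h \<in> TG i \<Longrightarrow>
    list_prod TT (map iQ qs) \<otimes>\<^bsub>TT\<^esub> h \<in> TG (i + int (length qs))"
proof (induction qs arbitrary: i)
  case Nil then show ?case by simp
next
  case (Cons q qs)
  have "list_prod TT (map iQ qs) \<otimes>\<^bsub>TT\<^esub> h \<in> TG (i + int (length qs))" using Cons by auto
  then have "iQ q \<otimes>\<^bsub>TT\<^esub> (list_prod TT (map iQ qs) \<otimes>\<^bsub>TT\<^esub> h) \<in> TG (i + int (length qs) + 1)"
    using Cons leftQ by auto
  moreover have "i + int (length (q # qs)) = i + int (length qs) + 1" by simp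
  moreover have "list_prod TT (map iQ (q # qs)) \<otimes>\<^bsub>TT\<^esub> h = iQ q \<otimes>\<^bsub>TT\<^esub> (list_prod TT (map iQ qs) \<otimes>\<^bsub>TT\<^esub> h)"
    using Cons by (simp add: T.m_assoc)
  ultimately show ?case by metis
qed

lemma leftLP: "set ps \<subseteq> carrier P \<Longrightarrow> h \<in> TG i \<Longrightarrow>
    list_prod TT (map iP ps) \<otimes>\<^bsub>TT\<^esub> h \<in> TG (i - int (length ps))"
proof (induction ps arbitrary: i)
  case Nil then show ?case by simp
next
  case (Cons p ps)
  have "list_prod TT (map iP ps) \<otimes>\<^bsub>TT\<^esub> h \<in> TG (i - int (length ps))" using Cons by auto
  then have "iP p \<otimes>\<^bsub>TT\<^esub> (list_prod TT (map iP ps) \<otimes>\<^bsub>TT\<^esub> h) \<in> TG (i - int (length ps) - 1)"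
    using Cons leftP by auto
  then show ?case using Cons by (simp add: T.m_assoc algebra_simps)
qed

lemma left_ipQ: "set qs \<subseteq> carrier Q \<Longrightarrow> r \<in> carrier R \<Longrightarrow> h \<in> TG i \<Longrightarrow>
    iota_pow TT iR iQ qs r \<otimes>\<^bsub>TT\<^esub> h \<in> TG (i + int (length qs))"
  unfolding iota_pow_def using leftLQ leftR by auto

lemma left_ipP: "set ps \<subseteq> carrier P \<Longrightarrow> r \<in> carrier R \<Longrightarrow> h \<in> TG i \<Longrightarrow>
    iota_pow TT iR iP ps r \<otimes>\<^bsub>TT\<^esub> h \<in> TG (i - int (length ps))"
  unfolding iota_pow_def using leftLP leftR by auto

lemma TG_mult: "g \<in> TG a \<Longrightarrow> h \<in> TG b \<Longrightarrow> g \<otimes>\<^bsub>TT\<^esub> h \<in> TG (a + b)"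
proof -
  assume g: "g \<in> TG a" and h: "h \<in> TG b"
  have hc: "h \<in> carrier TT" using h by simp
  from g show ?thesis unfolding toeplitz_grading_def
  proof induction
    case zero then show ?case using hc TG_closed(1) by (simp add: toeplitz_grading_def)
  next
    case (gen s)
    then show ?case
    proof (cases rule: gensE)
      case (1 qs ps r1 r2)
      have "iota_pow TT iR iP ps r2 \<otimes>\<^bsub>TT\<^esub> h \<in> TG (b - int (length ps))"
        using 1 h left_ipP by auto
      then have "iota_pow TT iR iQ qs r1 \<otimes>\<^bsub>TT\<^esub> (iota_pow TT iR iP ps r2 \<otimes>\<^bsub>TT\<^esub> h)
          \<in> TG (b - int (length ps) + int (length qs))"
        using 1 left_ipQ by auto
      moreover have "b - int (length ps) + int (length qs) = a + b" using 1 by simp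
      ultimately show ?thesis using 1 hc by (simp add: T.m_assoc toeplitz_grading_def)
    next
      case (2 r qs ps r1 r2)
      have "iota_pow TT iR iP ps r2 \<otimes>\<^bsub>TT\<^esub> h \<in> TG (b - int (length ps))"
        using 2 h left_ipP by auto
      then have "iota_pow TT iR iQ qs r1 \<otimes>\<^bsub>TT\<^esub> (iota_pow TT iR iP ps r2 \<otimes>\<^bsub>TT\<^esub> h)
          \<in> TG (b - int (length ps) + int (length qs))"
        using 2 left_ipQ by auto
      then have "iR r \<otimes>\<^bsub>TT\<^esub> (iota_pow TT iR iQ qs r1 \<otimes>\<^bsub>TT\<^esub> (iota_pow TT iR iP ps r2 \<otimes>\<^bsub>TT\<^esub> h))
          \<in> TG (b - int (length ps) + int (length qs))"
        using 2 leftR by auto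
      moreover have "b - int (length ps) + int (length qs) = a + b" using 2 by simp
      ultimately show ?thesis using 2 hc by (simp add: T.m_assoc toeplitz_grading_def)
    qed
  next
    case (add u v)
    have "u \<in> carrier TT" "v \<in> carrier TT" using add.hyps GS_c T.add_span_carrier by blast+
    then show ?case using add.IH hc TG_closed(2) by (simp add: T.l_distr toeplitz_grading_def)
  next
    case (neg u)
    have "u \<in> carrier TT" using neg.hyps GS_c T.add_span_carrier by blast+
    then show ?case using neg.IH hc TG_closed(3) by (simp add: T.l_minus toeplitz_grading_def)
  qed
qed

end



context tsys begin

lemma unit_left_gen: "g \<in> GS i \<Longrightarrow> iR \<one>\<^bsub>R\<^esub> \<otimes>\<^bsub>TT\<^esub> g = g"
proof -
  assume g: "g \<in> GS i"
  from g show ?thesis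
  proof (cases rule: gensE)
    case (1 qs ps r1 r2)
    show ?thesis
    proof (cases qs)
      case Nil
      then show ?thesis using 1
        by (simp add: iota_pow_def T.m_assoc[symmetric] iR_mult[symmetric])
    next
      case (Cons q1 qs')
      then have "iR \<one>\<^bsub>R\<^esub> \<otimes>\<^bsub>TT\<^esub> iQ q1 = iQ q1" using 1 by (simp add: iQ_lact[symmetric])
      then show ?thesis using 1 Cons
        by (simp add: iota_pow_def T.m_assoc[symmetric])
    qed
  next
    case (2 r qs ps r1 r2)
    then show ?thesis by (simp add: T.m_assoc[symmetric] iR_mult[symmetric])
  qed
qed

lemma LP_unit: "ps \<noteq> [] \<Longrightarrow> set ps \<subseteq> carrier P \<Longrightarrow>
   list_prod TT (map iP ps) \<otimes>\<^bsub>TT\<^esub> iR \<one>\<^bsub>R\<^esub> = list_prod TT (map iP ps)"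
proof (induction ps)
  case Nil then show ?case by simp
next
  case (Cons p ps)
  show ?case
  proof (cases ps)
    case Nil
    then show ?thesis using Cons by (simp add: iP_ract[symmetric])
  next
    case (Cons p2 ps2)
    then show ?thesis using Cons.IH Cons.prems by (simp add: T.m_assoc)
  qed
qed

lemma unit_right_gen: "g \<in> GS i \<Longrightarrow> g \<otimes>\<^bsub>TT\<^esub> iR \<one>\<^bsub>R\<^esub> = g"
proof -
  assume g: "g \<in> GS i"
  have H: "HH qs r1 ps r2 \<otimes>\<^bsub>TT\<^esub> iR \<one>\<^bsub>R\<^esub> = HH qs r1 ps r2"
    if c: "set qs \<subseteq> carrier Q" "set ps \<subseteq> carrier P" "r1 \<in> carrier R" "r2 \<in> carrier R" for qs ps r1 r2
  proof (cases ps)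
    case Nil
    then show ?thesis using c by (simp add: iota_pow_def T.m_assoc iR_mult[symmetric])
  next
    case (Cons p ps')
    then show ?thesis using c LP_unit[of ps] by (simp add: iota_pow_def T.m_assoc)
  qed
  from g show ?thesis
  proof (cases rule: gensE)
    case (1 qs ps r1 r2) then show ?thesis using H by simp
  next
    case (2 r qs ps r1 r2) then show ?thesis using H by (simp add: T.m_assoc)
  qed
qed

lemma unit_left: "h \<in> TG i \<Longrightarrow> iR \<one>\<^bsub>R\<^esub> \<otimes>\<^bsub>TT\<^esub> h = h"
  unfolding toeplitz_grading_def
proof (induction rule: add_span.induct)
  case zero then show ?case by simp
next
  case (gen s) then show ?case using unit_left_gen by simp
next
  case (add a b)
  have "a \<in> carrier TT" "b \<in> carrier TT" using add.hyps GS_c T.add_span_carrier by blast+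
  then show ?case using add.IH by (simp add: T.r_distr)
next
  case (neg a)
  have "a \<in> carrier TT" using neg.hyps GS_c T.add_span_carrier by blast+
  then show ?case using neg.IH by (simp add: T.r_minus)
qed

lemma unit_right: "h \<in> TG i \<Longrightarrow> h \<otimes>\<^bsub>TT\<^esub> iR \<one>\<^bsub>R\<^esub> = h"
  unfolding toeplitz_grading_def
proof (induction rule: add_span.induct)
  case zero then show ?case by simp
next
  case (gen s) then show ?case using unit_right_gen by simp
next
  case (add a b)
  have "a \<in> carrier TT" "b \<in> carrier TT" using add.hyps GS_c T.add_span_carrier by blast+
  then show ?case using add.IH by (simp add: T.l_distr)
next
  case (neg a)
  have "a \<in> carrier TT" using neg.hyps GS_c T.add_span_carrier by blast+
  then show ?case using neg.IH by (simp add: T.l_minus)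
qed

lemma e_TG0: "iR \<one>\<^bsub>R\<^esub> \<in> TG 0"
proof -
  have "HH [] \<one>\<^bsub>R\<^esub> [] \<one>\<^bsub>R\<^esub> \<in> TG 0" by (rule gen1) auto
  then show ?thesis by (simp add: iota_pow_def iR_mult[symmetric])
qed

lemma iQ_TG1: "q \<in> carrier Q \<Longrightarrow> iQ q \<in> TG 1"
proof -
  assume q: "q \<in> carrier Q"
  have "HH [q] \<one>\<^bsub>R\<^esub> [] \<one>\<^bsub>R\<^esub> \<in> TG 1" by (rule gen1) (use q in auto)
  then show ?thesis using q by (simp add: iota_pow_def iQ_ract[symmetric])
qed

lemma iP_TGm1: "p \<in> carrier P \<Longrightarrow> iP p \<in> TG (-1)"
proof -
  assume p: "p \<in> carrier P"
  have "HH [] \<one>\<^bsub>R\<^esub> [p] \<one>\<^bsub>R\<^esub> \<in> TG (-1)" by (rule gen1) (use p in auto)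
  then show ?thesis using p by (simp add: iota_pow_def iP_lact[symmetric])
qed

lemma pi_graph_c: "(f, b) \<in> pi_graph P Q psi iQ iP TT \<Longrightarrow> b \<in> carrier TT"
  by (induction rule: pi_graph.induct) auto

end



theorem mainTheorem5:
  fixes R :: "'r ring"
    and P :: "('r, 'p) bimod"
    and Q :: "('r, 'q) bimod"
    and \<psi> :: "'p \<Rightarrow> 'q \<Rightarrow> 'r"
    and J :: "'r set"
    and iP :: "'p \<Rightarrow> 't" and iQ :: "'q \<Rightarrow> 't" and iR :: "'r \<Rightarrow> 't"
    and TT :: "'t ring"
  assumes "unital_R_system R P Q \<psi>"
    and "cond_FS' P Q \<psi>"
    and "psi_compatible R P Q \<psi> J"
    and "\<one>\<^bsub>R\<^esub> \<in> J"
    and "psi_surjective R P Q \<psi>"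
    and "toeplitz_rep R P Q \<psi> iP iQ iR TT"
  shows "strongly_graded (rel_CP_ring R P Q \<psi> iP iQ iR TT J)
                         (rel_CP_grading R P Q \<psi> iP iQ iR TT J)"
proof -
  interpret tsys R P Q \<psi> iP iQ iR TT
    using assms(1,6) unfolding toeplitz_rep_def by unfold_locales auto
  have Jc: "J \<subseteq> carrier R"
    using assms(3) unfolding psi_compatible_def by (simp add: additive_subgroup.a_subset ideal.axioms(1))
  define S where "S = {iR x \<ominus>\<^bsub>TT\<^esub> b | x b. x \<in> J \<and> (Delta Q x, b) \<in> pi_graph P Q \<psi> iQ iP TT}"
  have Sc: "S \<subseteq> carrier TT" unfolding S_def using Jc pi_graph_c by auto
  define I where "I = TJ_ideal R P Q \<psi> iP iQ iR TT J"
  have II: "I = genideal TT S" unfolding I_def S_def TJ_ideal_def by simp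
  interpret I: ideal I TT unfolding II by (rule T.genideal_ideal[OF Sc])
  define Oq where "Oq = TT Quot I"
  interpret Oq: ring Oq unfolding Oq_def by (rule I.quotient_is_ring)
  define \<rho> where "\<rho> = (\<lambda>x. I +>\<^bsub>TT\<^esub> x)"
  interpret h: ring_hom_ring TT Oq \<rho> unfolding Oq_def \<rho>_def by (rule I.rcos_ring_hom_ring)
  define G where "G = (\<lambda>i. \<rho> ` TG i)"
  have RC: "rel_CP_ring R P Q \<psi> iP iQ iR TT J = Oq" unfolding Oq_def I_def rel_CP_ring_def by simp
  have GC': "rel_CP_grading R P Q \<psi> iP iQ iR TT J = G"
    unfolding G_def \<rho>_def I_def rel_CP_grading_def by simp
  have zO: "\<zero>\<^bsub>Oq\<^esub> = I" unfolding Oq_def FactRing_def by simp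
  define e where "e = \<rho> (iR \<one>\<^bsub>R\<^esub>)"
  have GC: "G i \<subseteq> carrier Oq" for i unfolding G_def using TG_c by auto
  have GM: "x \<otimes>\<^bsub>Oq\<^esub> y \<in> G (a + b)" if Hxy: "x \<in> G a" "y \<in> G b" for a b x y
  proof -
    obtain g where "x = \<rho> g" "g \<in> TG a" using Hxy(1) unfolding G_def by auto
    moreover obtain h where "y = \<rho> h" "h \<in> TG b" using Hxy(2) unfolding G_def by auto
    ultimately show ?thesis unfolding G_def using TG_mult by (auto intro!: image_eqI[where x="g \<otimes>\<^bsub>TT\<^esub> h"])
  qed
  have eO: "e \<in> carrier Oq" unfolding e_def by simp
  have SPc: "\<zero>\<^bsub>Oq\<^esub> \<in> Oq.SP G m n" "u \<in> Oq.SP G m n \<Longrightarrow> v \<in> Oq.SP G m n \<Longrightarrow> u \<oplus>\<^bsub>Oq\<^esub> v \<in> Oq.SP G m n"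
    "u \<in> Oq.SP G m n \<Longrightarrow> \<ominus>\<^bsub>Oq\<^esub> u \<in> Oq.SP G m n" for u v m n
    by (rule Oq.SP_closed; assumption)+
  have SPg: "\<rho> a \<otimes>\<^bsub>Oq\<^esub> \<rho> b \<in> Oq.SP G m n" if "a \<in> TG m" "b \<in> TG n" for a b m n
    unfolding Oq.SP_def G_def using that by (auto intro!: add_span.gen)
  have spc: "add_span R {\<psi> p q | p q. p \<in> carrier P \<and> q \<in> carrier Q} \<subseteq> carrier R"
    by (rule R.add_span_carrier) auto
  have e2: "e \<in> Oq.SP G (-1) 1"
  proof -
    have "\<rho> (iR r) \<in> Oq.SP G (-1) 1" if "r \<in> add_span R {\<psi> p q | p q. p \<in> carrier P \<and> q \<in> carrier Q}" for r
      using that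
    proof induction
      case zero then show ?case using SPc(1) by (simp add: iR_zero)
    next
      case (gen s)
      then obtain p q where pq: "s = \<psi> p q" "p \<in> carrier P" "q \<in> carrier Q" by auto
      then show ?case using SPg[OF iP_TGm1 iQ_TG1] by (simp add: psi_rel)
    next
      case (add a b)
      have "a \<in> carrier R" "b \<in> carrier R" using add.hyps spc by auto
      then show ?case using add.IH SPc(2) by (simp add: iR_add)
    next
      case (neg a)
      have "a \<in> carrier R" using neg.hyps spc by auto
      then show ?case using neg.IH SPc(3) by (simp add: iR_neg)
    qed
    moreover have "\<one>\<^bsub>R\<^esub> \<in> add_span R {\<psi> p q | p q. p \<in> carrier P \<and> q \<in> carrier Q}"
      using assms(5) unfolding psi_surjective_def by auto
    ultimately show ?thesis unfolding e_def by auto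
  qed
  have e1: "e \<in> Oq.SP G 1 (-1)"
  proof -
    have "\<exists>b. (f, b) \<in> pi_graph P Q \<psi> iQ iP TT \<and> \<rho> b \<in> Oq.SP G 1 (-1)" if "f \<in> FPQ P Q \<psi>" for f
      using that
    proof induction
      case zero
      have "\<rho> \<zero>\<^bsub>TT\<^esub> \<in> Oq.SP G 1 (-1)" using SPc(1) by simp
      then show ?case by (blast intro: pi_graph.zero)
    next
      case (theta q p)
      have "\<rho> (iQ q \<otimes>\<^bsub>TT\<^esub> iP p) \<in> Oq.SP G 1 (-1)" using SPg[OF iQ_TG1 iP_TGm1] theta by simp
      then show ?case using theta by (blast intro: pi_graph.theta)
    next
      case (add f g)
      then obtain b c where bc: "(f, b) \<in> pi_graph P Q \<psi> iQ iP TT" "\<rho> b \<in> Oq.SP G 1 (-1)"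
        "(g, c) \<in> pi_graph P Q \<psi> iQ iP TT" "\<rho> c \<in> Oq.SP G 1 (-1)" by blast
      have "b \<in> carrier TT" "c \<in> carrier TT" using bc pi_graph_c by auto
      then have "\<rho> (b \<oplus>\<^bsub>TT\<^esub> c) \<in> Oq.SP G 1 (-1)" using bc SPc(2) by simp
      then show ?case using bc by (blast intro: pi_graph.add)
    next
      case (neg f)
      then obtain b where bc: "(f, b) \<in> pi_graph P Q \<psi> iQ iP TT" "\<rho> b \<in> Oq.SP G 1 (-1)" by blast
      have "b \<in> carrier TT" using bc pi_graph_c by auto
      then have "\<rho> (\<ominus>\<^bsub>TT\<^esub> b) \<in> Oq.SP G 1 (-1)" using bc SPc(3) by simp
      then show ?case using bc by (blast intro: pi_graph.neg)
    qed
    moreover have "Delta Q \<one>\<^bsub>R\<^esub> \<in> FPQ P Q \<psi>" using assms(3,4) unfolding psi_compatible_def by auto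
    ultimately obtain b where b: "(Delta Q \<one>\<^bsub>R\<^esub>, b) \<in> pi_graph P Q \<psi> iQ iP TT" "\<rho> b \<in> Oq.SP G 1 (-1)"
      by blast
    have bc: "b \<in> carrier TT" using b pi_graph_c by auto
    have "iR \<one>\<^bsub>R\<^esub> \<ominus>\<^bsub>TT\<^esub> b \<in> S" unfolding S_def using b assms(4) by blast
    then have inI: "iR \<one>\<^bsub>R\<^esub> \<ominus>\<^bsub>TT\<^esub> b \<in> I" unfolding II using T.genideal_self[OF Sc] by auto
    have "iR \<one>\<^bsub>R\<^esub> = (iR \<one>\<^bsub>R\<^esub> \<ominus>\<^bsub>TT\<^esub> b) \<oplus>\<^bsub>TT\<^esub> b" using bc
      by (simp add: a_minus_def T.add.m_assoc T.l_neg)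
    then have "e = \<rho> (iR \<one>\<^bsub>R\<^esub> \<ominus>\<^bsub>TT\<^esub> b) \<oplus>\<^bsub>Oq\<^esub> \<rho> b" unfolding e_def using bc
      by (metis R.one_closed T.minus_closed h.hom_add iR_c)
    also have "\<rho> (iR \<one>\<^bsub>R\<^esub> \<ominus>\<^bsub>TT\<^esub> b) = \<zero>\<^bsub>Oq\<^esub>" unfolding \<rho>_def zO using inI by (rule I.a_rcos_const)
    finally have "e = \<rho> b" using bc by simp
    then show ?thesis using b by simp
  qed
  have "strongly_graded Oq G"
  proof (rule Oq.strongly_graded_abstract[where e = e])
    show "G i \<subseteq> carrier Oq" for i by (rule GC)
    show "x \<otimes>\<^bsub>Oq\<^esub> y \<in> G (a + b)" if Hxy: "x \<in> G a" "y \<in> G b" for a b x y using GM Hxy .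
    show "\<zero>\<^bsub>Oq\<^esub> \<in> G i" for i unfolding G_def using TG_closed(1) by (auto intro!: image_eqI[where x = "\<zero>\<^bsub>TT\<^esub>"])
    show "x \<oplus>\<^bsub>Oq\<^esub> y \<in> G i" if Hxy: "x \<in> G i" "y \<in> G i" for i x y
    proof -
      obtain g where "x = \<rho> g" "g \<in> TG i" using Hxy(1) unfolding G_def by auto
      moreover obtain h where "y = \<rho> h" "h \<in> TG i" using Hxy(2) unfolding G_def by auto
      ultimately show ?thesis unfolding G_def using TG_closed(2) by (auto intro!: image_eqI[where x="g \<oplus>\<^bsub>TT\<^esub> h"])
    qed
    show "\<ominus>\<^bsub>Oq\<^esub> x \<in> G i" if Hx: "x \<in> G i" for i x
    proof -
      obtain g where "x = \<rho> g" "g \<in> TG i" using Hx unfolding G_def by auto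
      moreover have "\<ominus>\<^bsub>Oq\<^esub> \<rho> g = \<rho> (\<ominus>\<^bsub>TT\<^esub> g)" using calculation by simp
      ultimately show ?thesis unfolding G_def using TG_closed(3) by (metis image_eqI)
    qed
    show "e \<in> G 0" unfolding e_def G_def using e_TG0 by auto
    show "e \<otimes>\<^bsub>Oq\<^esub> x = x" if Hx: "x \<in> G i" for i x
    proof -
      obtain g where "x = \<rho> g" "g \<in> TG i" using Hx unfolding G_def by auto
      then show ?thesis unfolding e_def using unit_left by (simp add: h.hom_mult[symmetric])
    qed
    show "x \<otimes>\<^bsub>Oq\<^esub> e = x" if Hx: "x \<in> G i" for i x
    proof -
      obtain g where "x = \<rho> g" "g \<in> TG i" using Hx unfolding G_def by auto
      then show ?thesis unfolding e_def using unit_right by (simp add: h.hom_mult[symmetric])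
    qed
    show "e \<in> Oq.SP G 1 (-1)" by (rule e1)
    show "e \<in> Oq.SP G (-1) 1" by (rule e2)
  qed
  then show ?thesis using RC GC' by simp
qed


end
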